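(* Let $G$ be a strongly connected network on $\mathcal{V}$ with random-walk transition matrix $P=[p_{ij}]$, stationary distribution $\pi$, and edge cost matrix $W=[w_{ij}]$. Let $L=\Pi(I-P)$ with $\Pi=\mathrm{diag}(\pi)$ and $L^+$ its Moore–Penrose pseudo-inverse. Let $r_m=\sum_{k} p_{mk}w_{mk}$ and $g_m=r_m\pi_m$. Then for all $i,j\in\mathcal{V}$ the hitting cost and commute cost satisfy $$\mathbb{U}_{ij}=\sum_m (L^+_{im}-L^+_{jm}+L^+_{jj}-L^+_{ij})\,g_m,$$ $$\mathbb{C}_{ij}=(L^+_{ii}+L^+_{jj}-L^+_{ij}-L^+_{ji})\sum_m g_m.$$
   Context: A network is a weighted directed graph with nonnegative affinity matrix $A$, $P=D^{-1}A$, $D=\mathrm{diag}(\sum_j a_{ij})$; strongly connected means all nodes mutually reachable. Each edge $(x,y)$ carries cost $w_{xy}$. The hitting cost $\mathbb{U}_{ij}$ is the expected total cost $\sum w_{X_{k-1}X_k}$ of the edges traversed by the random walk started at $i$ up to the first time it hits $j$ (equal to $0$ if $i=j$). The commute cost is $\mathbb{C}_{ij}=\mathbb{U}_{ij}+\mathbb{U}_{ji}$. *)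

theory Defs
  imports "HOL-Analysis.Analysis"
begin

definition degree :: "('n::finite \<Rightarrow> 'n \<Rightarrow> real) \<Rightarrow> 'n \<Rightarrow> real" where
  "degree A x = (\<Sum>z\<in>UNIV. A x z)"

definition trans_mat :: "('n::finite \<Rightarrow> 'n \<Rightarrow> real) \<Rightarrow> 'n \<Rightarrow> 'n \<Rightarrow> real" where
  "trans_mat A x y = A x y / degree A x"

definition strongly_connected :: "('n::finite \<Rightarrow> 'n \<Rightarrow> real) \<Rightarrow> bool" where
  "strongly_connected A \<longleftrightarrow> (\<forall>i j. (i, j) \<in> {(x, y). A x y > 0}\<^sup>*)"

definition stationary_dist :: "('n::finite \<Rightarrow> 'n \<Rightarrow> real) \<Rightarrow> ('n \<Rightarrow> real) \<Rightarrow> bool" where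
  "stationary_dist P \<pi> \<longleftrightarrow> (\<forall>i. \<pi> i \<ge> 0) \<and> (\<Sum>i\<in>UNIV. \<pi> i) = 1
      \<and> (\<forall>j. (\<Sum>i\<in>UNIV. \<pi> i * P i j) = \<pi> j)"

text \<open>A walk started at i is given by the list ys of the nodes visited after i.
  Its probability and its total edge cost.\<close>
definition walk_prob :: "('n \<Rightarrow> 'n \<Rightarrow> real) \<Rightarrow> 'n \<Rightarrow> 'n list \<Rightarrow> real" where
  "walk_prob P i ys = prod_list (map (\<lambda>(x, y). P x y) (zip (i # ys) ys))"

definition walk_cost :: "('n \<Rightarrow> 'n \<Rightarrow> real) \<Rightarrow> 'n \<Rightarrow> 'n list \<Rightarrow> real" where
  "walk_cost w i ys = sum_list (map (\<lambda>(x, y). w x y) (zip (i # ys) ys))"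

definition first_hit_walks :: "'n \<Rightarrow> 'n list set" where
  "first_hit_walks j = {ys. ys \<noteq> [] \<and> last ys = j \<and> j \<notin> set (butlast ys)}"

definition hitting_cost ::
  "('n::finite \<Rightarrow> 'n \<Rightarrow> real) \<Rightarrow> ('n \<Rightarrow> 'n \<Rightarrow> real) \<Rightarrow> 'n \<Rightarrow> 'n \<Rightarrow> real" where
  "hitting_cost A w i j =
     (if i = j then 0
      else (\<Sum>\<^sub>\<infinity>ys\<in>first_hit_walks j. walk_prob (trans_mat A) i ys * walk_cost w i ys))"

definition commute_cost ::
  "('n::finite \<Rightarrow> 'n \<Rightarrow> real) \<Rightarrow> ('n \<Rightarrow> 'n \<Rightarrow> real) \<Rightarrow> 'n \<Rightarrow> 'n \<Rightarrow> real" where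
  "commute_cost A w i j = hitting_cost A w i j + hitting_cost A w j i"

definition pinv :: "real^'n^'m \<Rightarrow> real^'m^'n" where
  "pinv M = (THE X. M ** X ** M = M \<and> X ** M ** X = X
                   \<and> transpose (M ** X) = M ** X \<and> transpose (X ** M) = X ** M)"

definition lap :: "('n::finite \<Rightarrow> real) \<Rightarrow> ('n \<Rightarrow> 'n \<Rightarrow> real) \<Rightarrow> real^'n^'n" where
  "lap \<pi> P = (\<chi> i j. \<pi> i * ((if i = j then 1 else 0) - P i j))"

end

theory Submission
  imports Defs
begin


lemma walk_prob_Nil[simp]: "walk_prob P i [] = 1"
  by (simp add: walk_prob_def)
lemma walk_prob_Cons[simp]: "walk_prob P i (k # ys) = P i k * walk_prob P k ys"
  by (simp add: walk_prob_def)
lemma walk_cost_Nil[simp]: "walk_cost w i [] = 0"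
  by (simp add: walk_cost_def)
lemma walk_cost_Cons[simp]: "walk_cost w i (k # ys) = w i k + walk_cost w k ys"
  by (simp add: walk_cost_def)

lemma walk_prob_nonneg: "\<forall>x y. P x y \<ge> (0::real) \<Longrightarrow> walk_prob P i ys \<ge> 0"
  by (induction ys arbitrary: i) auto

lemma walk_cost_bound: "\<forall>x y. \<bar>w x y\<bar> \<le> (B::real) \<Longrightarrow> \<bar>walk_cost w i ys\<bar> \<le> B * length ys"
proof (induction ys arbitrary: i)
  case Nil then show ?case by simp
next
  case (Cons k ys)
  have "\<bar>walk_cost w i (k#ys)\<bar> \<le> \<bar>w i k\<bar> + \<bar>walk_cost w k ys\<bar>" by simp
  also have "\<dots> \<le> B + B * length ys" using Cons by (intro add_mono) auto
  finally show ?case by (simp add: algebra_simps)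
qed

definition Fl :: "'n \<Rightarrow> nat \<Rightarrow> 'n list set" where
  "Fl j l = {ys \<in> first_hit_walks j. length ys \<le> l}"

lemma F_decomp: "first_hit_walks j = insert [j] (\<Union>k\<in>-{j}. Cons k ` first_hit_walks j)"
proof (intro set_eqI iffI)
  fix ys assume ys: "ys \<in> first_hit_walks j"
  then obtain k zs where ys_eq: "ys = k # zs" unfolding first_hit_walks_def by (cases ys) auto
  show "ys \<in> insert [j] (\<Union>k\<in>-{j}. Cons k ` first_hit_walks j)"
  proof (cases "k = j")
    case True
    then have "zs = []" using ys ys_eq unfolding first_hit_walks_def
      by (cases zs) auto
    then show ?thesis using True ys_eq by simp
  next
    case False
    then have "zs \<in> first_hit_walks j" using ys ys_eq unfolding first_hit_walks_def
      by (cases zs) auto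
    then show ?thesis using False ys_eq by auto
  qed
next
  fix ys assume "ys \<in> insert [j] (\<Union>k\<in>-{j}. Cons k ` first_hit_walks j)"
  then show "ys \<in> first_hit_walks j" unfolding first_hit_walks_def by auto
qed

lemma Fl_decomp: "Fl j (Suc l) = insert [j] (\<Union>k\<in>-{j}. Cons k ` Fl j l)"
proof -
  have "Fl j (Suc l) = {ys \<in> insert [j] (\<Union>k\<in>-{j}. Cons k ` first_hit_walks j). length ys \<le> Suc l}"
    unfolding Fl_def by (subst F_decomp) simp
  also have "\<dots> = insert [j] (\<Union>k\<in>-{j}. Cons k ` Fl j l)"
    unfolding Fl_def by auto
  finally show ?thesis .
qed

lemma Fl_0: "Fl j 0 = {}"
  unfolding Fl_def first_hit_walks_def by auto

lemma Fl_finite: "finite (Fl (j::'n::finite) l)"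
proof -
  have "Fl j l \<subseteq> {xs. set xs \<subseteq> UNIV \<and> length xs \<le> l}" unfolding Fl_def by auto
  then show ?thesis using finite_lists_length_le[of "UNIV::'n set" l] finite_subset by auto
qed

lemma has_sum_UN_finite:
  fixes f :: "'a \<Rightarrow> real"
  assumes "finite K" "\<And>k. k \<in> K \<Longrightarrow> (f has_sum s k) (B k)"
    "\<And>k k'. k \<in> K \<Longrightarrow> k' \<in> K \<Longrightarrow> k \<noteq> k' \<Longrightarrow> B k \<inter> B k' = {}"
  shows "(f has_sum sum s K) (\<Union>k\<in>K. B k)"
  using assms
proof (induction K rule: finite_induct)
  case empty then show ?case by simp
next
  case (insert x K)
  have "(f has_sum (s x + sum s K)) (B x \<union> (\<Union>k\<in>K. B k))"
    by (rule has_sum_Un_disjoint) (use insert in auto)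
  then show ?case using insert by simp
qed

lemma hs_decomp:
  fixes f :: "'n::finite list \<Rightarrow> real"
  assumes X: "X = insert [j] (\<Union>k\<in>-{j}. Cons k ` Y)"
    and s: "\<And>k. k \<noteq> j \<Longrightarrow> ((\<lambda>ys. f (k # ys)) has_sum s k) Y"
  shows "(f has_sum (f [j] + sum s (-{j}))) X"
proof -
  have "(f has_sum sum s (-{j})) (\<Union>k\<in>-{j}. Cons k ` Y)"
  proof (rule has_sum_UN_finite)
    fix k assume "k \<in> -{j}"
    then show "(f has_sum s k) (Cons k ` Y)"
      using s[of k] by (subst has_sum_reindex) (auto simp: o_def)
  qed auto
  moreover have "[j] \<notin> (\<Union>k\<in>-{j}. Cons k ` Y)" by auto
  ultimately show ?thesis unfolding X by (rule has_sum_insert[rotated])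
qed

lemma sum_decomp:
  fixes f :: "'n::finite list \<Rightarrow> real"
  shows "sum f (Fl j (Suc l)) = f [j] + (\<Sum>k\<in>-{j}. sum (\<lambda>ys. f (k # ys)) (Fl j l))"
proof -
  have "(f has_sum (f [j] + (\<Sum>k\<in>-{j}. sum (\<lambda>ys. f (k # ys)) (Fl j l)))) (Fl j (Suc l))"
    by (rule hs_decomp[OF Fl_decomp]) (simp add: Fl_finite)
  moreover have "(f has_sum sum f (Fl j (Suc l))) (Fl j (Suc l))" by (simp add: Fl_finite)
  ultimately show ?thesis using has_sum_unique by blast
qed


lemma S_bound:
  fixes P :: "'n::finite \<Rightarrow> 'n \<Rightarrow> real"
  assumes Pnn: "\<forall>x y. P x y \<ge> 0" and Prow: "\<forall>x. (\<Sum>k\<in>UNIV. P x k) = 1"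
  shows "(\<Sum>ys\<in>Fl j l. walk_prob P i ys) \<le> 1"
proof (induction l arbitrary: i)
  case 0 then show ?case by (simp add: Fl_0)
next
  case (Suc l)
  have "(\<Sum>ys\<in>Fl j (Suc l). walk_prob P i ys)
      = P i j + (\<Sum>k\<in>-{j}. P i k * (\<Sum>ys\<in>Fl j l. walk_prob P k ys))"
    by (subst sum_decomp) (simp add: sum_distrib_left)
  also have "\<dots> \<le> P i j + (\<Sum>k\<in>-{j}. P i k)"
    using Suc Pnn by (intro add_left_mono sum_mono) (simp add: mult_left_le)
  also have "\<dots> = (\<Sum>k\<in>UNIV. P i k)"
    by (metis Compl_eq_Diff_UNIV finite iso_tuple_UNIV_I sum.remove)
  finally show ?case using Prow by simp
qed

lemma T_bound:
  fixes P :: "'n::finite \<Rightarrow> 'n \<Rightarrow> real"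
  assumes Pnn: "\<forall>x y. P x y \<ge> 0" and Prow: "\<forall>x. (\<Sum>k\<in>UNIV. P x k) = 1"
    and hsup: "\<forall>i. 1 + (\<Sum>k\<in>-{j}. P i k * h k) \<le> h i" and hnn: "\<forall>i. h i \<ge> 0"
  shows "(\<Sum>ys\<in>Fl j l. walk_prob P i ys * length ys) \<le> h i"
proof (induction l arbitrary: i)
  case 0 then show ?case using hnn by (simp add: Fl_0)
next
  case (Suc l)
  have "(\<Sum>ys\<in>Fl j (Suc l). walk_prob P i ys * length ys)
      = P i j + (\<Sum>k\<in>-{j}. P i k * ((\<Sum>ys\<in>Fl j l. walk_prob P k ys)
                   + (\<Sum>ys\<in>Fl j l. walk_prob P k ys * length ys)))"
    by (subst sum_decomp) (simp add: sum_distrib_left sum.distrib[symmetric] algebra_simps)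
  also have "\<dots> \<le> P i j + (\<Sum>k\<in>-{j}. P i k * (1 + h k))"
    using Suc Pnn S_bound[OF Pnn Prow] by (intro add_left_mono sum_mono mult_left_mono add_mono) auto
  also have "\<dots> = (\<Sum>k\<in>UNIV. P i k) + (\<Sum>k\<in>-{j}. P i k * h k)"
    by (simp add: algebra_simps sum.distrib)
       (metis Compl_eq_Diff_UNIV finite iso_tuple_UNIV_I sum.remove)
  finally show ?case using Prow hsup[rule_format, of i] by simp
qed

lemma len_summable:
  fixes P :: "'n::finite \<Rightarrow> 'n \<Rightarrow> real"
  assumes Pnn: "\<forall>x y. P x y \<ge> 0" and Prow: "\<forall>x. (\<Sum>k\<in>UNIV. P x k) = 1"
    and hsup: "\<forall>i. 1 + (\<Sum>k\<in>-{j}. P i k * h k) \<le> h i" and hnn: "\<forall>i. h i \<ge> 0"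
  shows "(\<lambda>ys. walk_prob P i ys * length ys) summable_on first_hit_walks j"
proof (rule nonneg_bdd_above_summable_on)
  show "bdd_above (sum (\<lambda>ys. walk_prob P i ys * length ys) ` {F. F \<subseteq> first_hit_walks j \<and> finite F})"
  proof (rule bdd_aboveI)
    fix x assume "x \<in> sum (\<lambda>ys. walk_prob P i ys * length ys) ` {F. F \<subseteq> first_hit_walks j \<and> finite F}"
    then obtain X where X: "X \<subseteq> first_hit_walks j" "finite X"
      and x: "x = sum (\<lambda>ys. walk_prob P i ys * length ys) X" by auto
    define l where "l = Max (insert 0 (length ` X))"
    have "X \<subseteq> Fl j l" unfolding Fl_def l_def using X by auto
    then have "x \<le> (\<Sum>ys\<in>Fl j l. walk_prob P i ys * length ys)"
      unfolding x using Pnn walk_prob_nonneg[OF Pnn]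
      by (intro sum_mono2) (auto simp: Fl_finite)
    also have "\<dots> \<le> h i" by (rule T_bound[OF assms])
    finally show "x \<le> h i" .
  qed
qed (use walk_prob_nonneg[OF Pnn] in auto)

lemma prob_summable:
  fixes P :: "'n::finite \<Rightarrow> 'n \<Rightarrow> real"
  assumes Pnn: "\<forall>x y. P x y \<ge> 0" and ls: "(\<lambda>ys. walk_prob P i ys * length ys) summable_on first_hit_walks j"
  shows "(\<lambda>ys. walk_prob P i ys) summable_on first_hit_walks j"
proof (rule summable_on_comparison_test[OF ls])
  fix ys assume "ys \<in> first_hit_walks j"
  then have "length ys \<ge> 1" unfolding first_hit_walks_def by (cases ys) auto
  then show "walk_prob P i ys \<le> walk_prob P i ys * real (length ys)"
    using walk_prob_nonneg[OF Pnn, of i ys] by (simp add: mult_le_cancel_left1)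
qed (use walk_prob_nonneg[OF Pnn] in auto)

lemma cost_summable:
  fixes P :: "'n::finite \<Rightarrow> 'n \<Rightarrow> real"
  assumes Pnn: "\<forall>x y. P x y \<ge> 0" and ls: "(\<lambda>ys. walk_prob P i ys * length ys) summable_on first_hit_walks j"
  shows "(\<lambda>ys. walk_prob P i ys * walk_cost w i ys) summable_on first_hit_walks j"
proof -
  define B where "B = (\<Sum>x\<in>UNIV. \<Sum>y\<in>UNIV. \<bar>w x y\<bar>)"
  have Bw: "\<forall>x y. \<bar>w x y\<bar> \<le> B"
  proof (intro allI)
    fix x y
    have "\<bar>w x y\<bar> \<le> (\<Sum>y\<in>UNIV. \<bar>w x y\<bar>)" by (rule member_le_sum) auto
    also have "\<dots> \<le> B" unfolding B_def by (rule member_le_sum[where f="\<lambda>x. \<Sum>y\<in>UNIV. \<bar>w x y\<bar>"]) (auto intro: sum_nonneg)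
    finally show "\<bar>w x y\<bar> \<le> B" .
  qed
  have "(\<lambda>ys. B * (walk_prob P i ys * length ys)) summable_on first_hit_walks j"
    using ls by (rule summable_on_cmult_right)
  then have "(\<lambda>ys. norm (walk_prob P i ys * walk_cost w i ys)) summable_on first_hit_walks j"
  proof (rule Infinite_Sum.abs_summable_on_comparison_test'[where g="\<lambda>ys. B * (walk_prob P i ys * length ys)"])
    fix ys
    have "\<bar>walk_prob P i ys * walk_cost w i ys\<bar> = walk_prob P i ys * \<bar>walk_cost w i ys\<bar>"
      using walk_prob_nonneg[OF Pnn] by (simp add: abs_mult)
    also have "\<dots> \<le> walk_prob P i ys * (B * length ys)"
      using walk_prob_nonneg[OF Pnn] walk_cost_bound[OF Bw] by (intro mult_left_mono) auto
    finally show "norm (walk_prob P i ys * walk_cost w i ys) \<le> B * (walk_prob P i ys * length ys)"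
      by (simp add: algebra_simps)
  qed
  then show ?thesis by (rule abs_summable_summable)
qed


lemma Hp_rec:
  fixes P :: "'n::finite \<Rightarrow> 'n \<Rightarrow> real"
  assumes sm: "\<And>k. (\<lambda>ys. walk_prob P k ys) summable_on first_hit_walks j"
  shows "infsum (walk_prob P i) (first_hit_walks j)
     = P i j + (\<Sum>k\<in>-{j}. P i k * infsum (walk_prob P k) (first_hit_walks j))"
proof -
  have "(walk_prob P i has_sum (walk_prob P i [j] + (\<Sum>k\<in>-{j}. P i k * infsum (walk_prob P k) (first_hit_walks j))))
         (first_hit_walks j)"
  proof (rule hs_decomp[OF F_decomp])
    fix k
    show "((\<lambda>ys. walk_prob P i (k # ys)) has_sum P i k * infsum (walk_prob P k) (first_hit_walks j)) (first_hit_walks j)"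
      using has_sum_cmult_right[OF has_sum_infsum[OF sm[of k]], of "P i k"] by simp
  qed
  then show ?thesis by (simp add: infsumI)
qed

lemma H_rec:
  fixes P :: "'n::finite \<Rightarrow> 'n \<Rightarrow> real"
  assumes sm: "\<And>k. (\<lambda>ys. walk_prob P k ys) summable_on first_hit_walks j"
    and sc: "\<And>k. (\<lambda>ys. walk_prob P k ys * walk_cost w k ys) summable_on first_hit_walks j"
  shows "infsum (\<lambda>ys. walk_prob P i ys * walk_cost w i ys) (first_hit_walks j)
     = P i j * w i j + (\<Sum>k\<in>-{j}. P i k * w i k * infsum (walk_prob P k) (first_hit_walks j)
          + P i k * infsum (\<lambda>ys. walk_prob P k ys * walk_cost w k ys) (first_hit_walks j))"
proof -
  have "((\<lambda>ys. walk_prob P i ys * walk_cost w i ys) has_sum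
     ((\<lambda>ys. walk_prob P i ys * walk_cost w i ys) [j] + (\<Sum>k\<in>-{j}. P i k * w i k * infsum (walk_prob P k) (first_hit_walks j)
          + P i k * infsum (\<lambda>ys. walk_prob P k ys * walk_cost w k ys) (first_hit_walks j))))
         (first_hit_walks j)"
  proof (rule hs_decomp[OF F_decomp])
    fix k
    have "((\<lambda>ys. P i k * w i k * walk_prob P k ys + P i k * (walk_prob P k ys * walk_cost w k ys)) has_sum
       (P i k * w i k * infsum (walk_prob P k) (first_hit_walks j)
          + P i k * infsum (\<lambda>ys. walk_prob P k ys * walk_cost w k ys) (first_hit_walks j))) (first_hit_walks j)"
      by (intro has_sum_add has_sum_cmult_right has_sum_infsum sm sc)
    then show "((\<lambda>ys. walk_prob P i (k # ys) * walk_cost w i (k # ys)) has_sum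
       (P i k * w i k * infsum (walk_prob P k) (first_hit_walks j)
          + P i k * infsum (\<lambda>ys. walk_prob P k ys * walk_cost w k ys) (first_hit_walks j))) (first_hit_walks j)"
      by (simp add: algebra_simps)
  qed
  then show ?thesis by (simp add: infsumI)
qed

lemma max_principle_le:
  fixes P :: "'n::finite \<Rightarrow> 'n \<Rightarrow> real"
  assumes Pnn: "\<forall>x y. P x y \<ge> 0" and Prow: "\<forall>x. (\<Sum>k\<in>UNIV. P x k) = 1"
    and conn: "\<forall>i. (i, j) \<in> {(x, y). P x y > 0}\<^sup>*"
    and dj: "d j = 0" and harm: "\<forall>i. i \<noteq> j \<longrightarrow> d i = (\<Sum>k\<in>UNIV. P i k * d k)"
  shows "d i \<le> 0"
proof -
  define M where "M = Max (range d)"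
  have Mge: "\<And>x. d x \<le> M" unfolding M_def by (rule Max_ge) auto
  obtain i0 where i0: "d i0 = M" unfolding M_def
    by (metis (mono_tags, lifting) Max_in UNIV_not_empty empty_is_image finite finite_imageI imageE)
  have stepM: "d y = M" if "d x = M" "x \<noteq> j" "P x y > 0" for x y
  proof -
    have "(\<Sum>k\<in>UNIV. P x k * (M - d k)) = M * (\<Sum>k\<in>UNIV. P x k) - (\<Sum>k\<in>UNIV. P x k * d k)"
      by (simp add: algebra_simps sum_subtractf sum_distrib_left)
    also have "\<dots> = 0" using Prow harm that by simp
    finally have "(\<Sum>k\<in>UNIV. P x k * (M - d k)) = 0" .
    moreover have "\<forall>k\<in>UNIV. P x k * (M - d k) \<ge> 0" using Pnn Mge by simp
    ultimately have "\<forall>k. P x k * (M - d k) = 0"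
      using sum_nonneg_eq_0_iff[of UNIV "\<lambda>k. P x k * (M - d k)"] by simp
    then have "P x y * (M - d y) = 0" by blast
    then show ?thesis using that by simp
  qed
  have reach: "d t = M \<or> d j = M" if "(i0, t) \<in> {(x, y). P x y > 0}\<^sup>*" for t
    using that
  proof (induction rule: rtrancl_induct)
    case base then show ?case using i0 by simp
  next
    case (step y z)
    then show ?case using stepM[of y z] by (cases "y = j") auto
  qed
  have "d j = M" using reach[of j] conn by auto
  then show ?thesis using Mge[of i] dj by simp
qed

lemma max_principle:
  fixes P :: "'n::finite \<Rightarrow> 'n \<Rightarrow> real"
  assumes Pnn: "\<forall>x y. P x y \<ge> 0" and Prow: "\<forall>x. (\<Sum>k\<in>UNIV. P x k) = 1"
    and conn: "\<forall>i. (i, j) \<in> {(x, y). P x y > 0}\<^sup>*"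
    and dj: "d j = 0" and harm: "\<forall>i. i \<noteq> j \<longrightarrow> d i = (\<Sum>k\<in>UNIV. P i k * d k)"
  shows "d i = 0"
proof -
  have "d i \<le> 0" by (rule max_principle_le[OF Pnn Prow conn dj harm])
  moreover have "- d i \<le> 0"
    by (rule max_principle_le[OF Pnn Prow conn, of "\<lambda>x. - d x"]) (use dj harm in \<open>auto simp: sum_negf\<close>)
  ultimately show ?thesis by simp
qed



definition Emat :: "real^'n::finite^'n" where
  "Emat = (\<chi> i j. 1 / real CARD('n))"

lemma matrix_sub_ldistrib: "(A::real^'n::finite^'m) ** (B - C) = A ** B - A ** C"
  by (vector matrix_matrix_mult_def sum_subtractf[symmetric] field_simps)
lemma matrix_sub_rdistrib: "((B::real^'n::finite^'m) - C) ** (A::real^'p::finite^'n) = B ** A - C ** A"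
  by (vector matrix_matrix_mult_def sum_subtractf[symmetric] field_simps)
lemma matrix_add_rdistrib: "((B::real^'n::finite^'m) + C) ** (A::real^'p::finite^'n) = B ** A + C ** A"
  by (vector matrix_matrix_mult_def sum.distrib[symmetric] field_simps)

lemma EE: "Emat ** Emat = (Emat :: real^'n::finite^'n)"
  by (simp add: Emat_def matrix_matrix_mult_def vec_eq_iff)

lemma transpose_E: "transpose (Emat :: real^'n::finite^'n) = Emat"
  by (simp add: Emat_def transpose_def vec_eq_iff)

lemma delta_sum1: "(\<Sum>k\<in>(UNIV::'n::finite set). (c::real) * (if i = k then 1 else 0)) = c"
proof -
  have "(\<Sum>k\<in>(UNIV::'n set). (c::real) * (if i = k then 1 else 0)) = (\<Sum>k\<in>UNIV. if i = k then c else 0)"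
    by (rule sum.cong) auto
  then show ?thesis by simp
qed

lemma delta_sum2: "(\<Sum>k\<in>(UNIV::'n::finite set). (c k::real) * (if k = i then 1 else 0)) = c i"
proof -
  have "(\<Sum>k\<in>(UNIV::'n set). (c k::real) * (if k = i then 1 else 0)) = (\<Sum>k\<in>UNIV. if k = i then c k else 0)"
    by (rule sum.cong) auto
  then show ?thesis by simp
qed

lemma lap_rowsum:
  fixes P :: "'n::finite \<Rightarrow> 'n \<Rightarrow> real"
  assumes Prow: "\<forall>x. (\<Sum>k\<in>UNIV. P x k) = (1::real)"
  shows "(\<Sum>k\<in>UNIV. lap \<pi> P $ i $ k) = 0"
proof -
  have "(\<Sum>k\<in>UNIV. lap \<pi> P $ i $ k) = (\<Sum>k\<in>UNIV. \<pi> i * (if i = k then 1 else 0)) - \<pi> i * (\<Sum>k\<in>UNIV. P i k)"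
    by (simp add: lap_def sum_distrib_left sum_subtractf right_diff_distrib)
  then show ?thesis using Prow delta_sum1 by simp
qed

lemma lap_colsum:
  fixes P :: "'n::finite \<Rightarrow> 'n \<Rightarrow> real"
  assumes stat: "\<forall>j. (\<Sum>i\<in>UNIV. \<pi> i * P i j) = (\<pi> j::real)"
  shows "(\<Sum>i\<in>UNIV. lap \<pi> P $ i $ k) = 0"
proof -
  have "(\<Sum>i\<in>UNIV. lap \<pi> P $ i $ k) = (\<Sum>i\<in>UNIV. \<pi> i * (if i = k then 1 else 0)) - (\<Sum>i\<in>UNIV. \<pi> i * P i k)"
    by (simp add: lap_def sum_subtractf right_diff_distrib)
  then show ?thesis using stat delta_sum2[of \<pi> k] by simp
qed

lemma LE:
  fixes P :: "'n::finite \<Rightarrow> 'n \<Rightarrow> real"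
  assumes Prow: "\<forall>x. (\<Sum>k\<in>UNIV. P x k) = (1::real)"
  shows "lap \<pi> P ** Emat = 0"
proof -
  have "(\<Sum>k\<in>UNIV. lap \<pi> P $ i $ k / real CARD('n)) = 0" for i :: 'n
    using lap_rowsum[OF Prow, of \<pi> i] by (simp add: sum_divide_distrib[symmetric])
  then show ?thesis by (simp add: Emat_def matrix_matrix_mult_def vec_eq_iff)
qed

lemma EL:
  fixes P :: "'n::finite \<Rightarrow> 'n \<Rightarrow> real"
  assumes stat: "\<forall>j. (\<Sum>i\<in>UNIV. \<pi> i * P i j) = (\<pi> j::real)"
  shows "Emat ** lap \<pi> P = (0 :: real^'n::finite^'n)"
proof -
  have "(\<Sum>k\<in>UNIV. lap \<pi> P $ k $ i / real CARD('n)) = 0" for i :: 'n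
    using lap_colsum[OF stat, of i] by (simp add: sum_divide_distrib[symmetric])
  then show ?thesis by (simp add: Emat_def matrix_matrix_mult_def vec_eq_iff)
qed


lemma lap_mulv:
  fixes P :: "'n::finite \<Rightarrow> 'n \<Rightarrow> real"
  shows "(\<Sum>k\<in>UNIV. lap \<pi> P $ i $ k * x k) = \<pi> i * (x i - (\<Sum>k\<in>UNIV. P i k * x k))"
proof -
  have "(\<Sum>k\<in>UNIV. lap \<pi> P $ i $ k * x k) = (\<Sum>k\<in>UNIV. (if k = i then \<pi> i * x i else 0) - \<pi> i * (P i k * x k))"
    by (rule sum.cong) (auto simp: lap_def algebra_simps)
  also have "\<dots> = \<pi> i * x i - \<pi> i * (\<Sum>k\<in>UNIV. P i k * x k)"
    by (simp add: sum_subtractf sum_distrib_left)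
  finally show ?thesis by (simp add: algebra_simps)
qed

lemma ker_trivial:
  fixes P :: "'n::finite \<Rightarrow> 'n \<Rightarrow> real"
  assumes Pnn: "\<forall>x y. P x y \<ge> 0" and Prow: "\<forall>x. (\<Sum>k\<in>UNIV. P x k) = 1"
    and conn: "\<forall>i j. (i, j) \<in> {(x, y). P x y > 0}\<^sup>*"
    and stat: "\<forall>j. (\<Sum>i\<in>UNIV. \<pi> i * P i j) = \<pi> j" and pipos: "\<forall>i. \<pi> i > 0"
    and x: "(lap \<pi> P + Emat) *v x = 0"
  shows "x = 0"
proof -
  define s where "s = (\<Sum>k\<in>UNIV. x $ k)"
  have row: "(\<Sum>k\<in>UNIV. lap \<pi> P $ i $ k * x $ k) + s / real CARD('n) = 0" for i
  proof -
    have "((lap \<pi> P + Emat) *v x) $ i = 0" using x by simp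
    then show ?thesis
      by (simp add: matrix_vector_mult_def Emat_def s_def sum.distrib distrib_right sum_divide_distrib)
  qed
  have "(\<Sum>i\<in>UNIV. (\<Sum>k\<in>UNIV. lap \<pi> P $ i $ k * x $ k)) = (\<Sum>k\<in>UNIV. (\<Sum>i\<in>UNIV. lap \<pi> P $ i $ k) * x $ k)"
    by (subst sum.swap) (simp add: sum_distrib_right)
  also have "\<dots> = 0" using lap_colsum[OF stat] by simp
  finally have "(\<Sum>i\<in>UNIV. (\<Sum>k\<in>UNIV. lap \<pi> P $ i $ k * x $ k)) = 0" .
  moreover have "(\<Sum>i\<in>UNIV. (\<Sum>k\<in>UNIV. lap \<pi> P $ i $ k * x $ k)) = - s"
  proof -
    have "(\<Sum>k\<in>UNIV. lap \<pi> P $ i $ k * x $ k) = - (s / real CARD('n))" for i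
      using row[of i] by linarith
    then show ?thesis by simp
  qed
  ultimately have s0: "s = 0" by simp
  have harm: "x $ i = (\<Sum>k\<in>UNIV. P i k * x $ k)" for i
  proof -
    have "\<pi> i * (x $ i - (\<Sum>k\<in>UNIV. P i k * x $ k)) = 0"
      using row[of i] s0 lap_mulv[of \<pi> P i "\<lambda>k. x $ k"] by simp
    then show ?thesis using pipos[rule_format, of i] by simp
  qed
  fix j0 :: 'n
  have const: "x $ i - x $ j0 = 0" for i
  proof (rule max_principle[OF Pnn Prow, of j0 "\<lambda>i. x $ i - x $ j0"])
    show "\<forall>i. (i, j0) \<in> {(x, y). P x y > 0}\<^sup>*" using conn by blast
    show "\<forall>i. i \<noteq> j0 \<longrightarrow> x $ i - x $ j0 = (\<Sum>k\<in>UNIV. P i k * (x $ k - x $ j0))"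
    proof (intro allI impI)
      fix i
      have "(\<Sum>k\<in>UNIV. P i k * (x $ k - x $ j0)) = (\<Sum>k\<in>UNIV. P i k * x $ k) - (\<Sum>k\<in>UNIV. P i k) * x $ j0"
        by (simp add: right_diff_distrib sum_subtractf sum_distrib_right)
      then show "x $ i - x $ j0 = (\<Sum>k\<in>UNIV. P i k * (x $ k - x $ j0))"
        using harm[of i] Prow by simp
    qed
  qed simp
  have "s = (\<Sum>k\<in>(UNIV::'n set). x $ j0)" unfolding s_def using const by (intro sum.cong) auto
  then have "s = real CARD('n) * x $ j0" by simp
  then have "x $ j0 = 0" using s0 by simp
  then show ?thesis using const by (simp add: vec_eq_iff)
qed


lemma mp_unique:
  fixes A :: "real^'n::finite^'m::finite" and X Y :: "real^'m^'n"
  assumes X1: "A ** X ** A = A" and X2: "X ** A ** X = X"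
    and X3: "transpose (A ** X) = A ** X" and X4: "transpose (X ** A) = X ** A"
    and Y1: "A ** Y ** A = A" and Y2: "Y ** A ** Y = Y"
    and Y3: "transpose (A ** Y) = A ** Y" and Y4: "transpose (Y ** A) = Y ** A"
  shows "X = Y"
proof -
  have AX: "A ** X = A ** Y"
  proof -
    have "A ** X = (A ** Y ** A) ** X" using Y1 by simp
    also have "\<dots> = (A ** Y) ** (A ** X)" by (simp add: matrix_mul_assoc)
    also have "\<dots> = transpose (A ** Y) ** transpose (A ** X)" using X3 Y3 by simp
    also have "\<dots> = transpose ((A ** X) ** (A ** Y))" by (simp add: matrix_transpose_mul)
    also have "(A ** X) ** (A ** Y) = A ** Y" using X1 by (simp add: matrix_mul_assoc)
    finally show ?thesis using Y3 by simp
  qed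
  have XA: "X ** A = Y ** A"
  proof -
    have "X ** A = X ** (A ** Y ** A)" using Y1 by simp
    also have "\<dots> = (X ** A) ** (Y ** A)" by (simp add: matrix_mul_assoc)
    also have "\<dots> = transpose (X ** A) ** transpose (Y ** A)" using X4 Y4 by simp
    also have "\<dots> = transpose ((Y ** A) ** (X ** A))" by (simp add: matrix_transpose_mul)
    also have "(Y ** A) ** (X ** A) = Y ** A" using X1 by (metis matrix_mul_assoc)
    finally show ?thesis using Y4 by simp
  qed
  have "X = X ** (A ** X)" using X2 by (simp add: matrix_mul_assoc)
  also have "\<dots> = (X ** A) ** Y" using AX by (simp add: matrix_mul_assoc)
  also have "\<dots> = Y" using XA Y2 by (simp add: matrix_mul_assoc)
  finally show ?thesis .
qed

lemma pinv_lap: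
  fixes P :: "'n::finite \<Rightarrow> 'n \<Rightarrow> real"
  assumes Pnn: "\<forall>x y. P x y \<ge> 0" and Prow: "\<forall>x. (\<Sum>k\<in>UNIV. P x k) = 1"
    and conn: "\<forall>i j. (i, j) \<in> {(x, y). P x y > 0}\<^sup>*"
    and stat: "\<forall>j. (\<Sum>i\<in>UNIV. \<pi> i * P i j) = \<pi> j" and pipos: "\<forall>i. \<pi> i > 0"
  shows "lap \<pi> P ** pinv (lap \<pi> P) = mat 1 - Emat"
proof -
  define L where "L = lap \<pi> P"
  define M where "M = L + Emat"
  have "\<exists>B. B ** M = mat 1"
    unfolding matrix_left_invertible_ker M_def L_def
    using ker_trivial[OF assms] by blast
  then obtain B where BM: "B ** M = mat 1" by blast
  then have MB: "M ** B = mat 1" using matrix_left_right_inverse by blast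
  have LE': "L ** Emat = 0" unfolding L_def by (rule LE[OF Prow])
  have EL': "Emat ** L = 0" unfolding L_def by (rule EL[OF stat])
  have ME: "M ** Emat = Emat" unfolding M_def by (simp add: matrix_add_rdistrib LE' EE)
  have EM: "Emat ** M = Emat" unfolding M_def by (simp add: matrix_add_ldistrib EL' EE)
  have EB: "Emat ** B = Emat"
  proof -
    have "Emat ** B = (Emat ** M) ** B" using EM by simp
    also have "\<dots> = Emat" using MB by (simp add: matrix_mul_assoc[symmetric])
    finally show ?thesis .
  qed
  have BE: "B ** Emat = Emat"
  proof -
    have "B ** Emat = B ** (M ** Emat)" using ME by simp
    also have "\<dots> = Emat" using BM by (simp add: matrix_mul_assoc)
    finally show ?thesis .
  qed
  define X where "X = B - Emat"
  have LM: "L = M - Emat" unfolding M_def by simp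
  have LX: "L ** X = mat 1 - Emat"
    unfolding X_def LM by (simp add: matrix_sub_ldistrib matrix_sub_rdistrib MB ME EB EE)
  have XL: "X ** L = mat 1 - Emat"
    unfolding X_def LM by (simp add: matrix_sub_ldistrib matrix_sub_rdistrib BM BE EM EE)
  have T: "transpose (mat 1 - Emat) = (mat 1 - Emat :: real^'n^'n)"
    by (simp add: transpose_def vec_eq_iff Emat_def mat_def)
  have c1: "L ** X ** L = L" using LX EL' by (simp add: matrix_sub_rdistrib)
  have c2: "X ** L ** X = X" using XL
    by (simp add: matrix_sub_rdistrib X_def matrix_sub_ldistrib EB EE)
  have c3: "transpose (L ** X) = L ** X" using LX T by simp
  have c4: "transpose (X ** L) = X ** L" using XL T by simp
  have "pinv L = X"
    unfolding pinv_def
  proof (rule the_equality)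
    show "L ** X ** L = L \<and> X ** L ** X = X \<and> transpose (L ** X) = L ** X \<and> transpose (X ** L) = X ** L"
      using c1 c2 c3 c4 by blast
    fix Y assume "L ** Y ** L = L \<and> Y ** L ** Y = Y \<and> transpose (L ** Y) = L ** Y \<and> transpose (Y ** L) = Y ** L"
    then show "Y = X" using mp_unique[OF _ _ _ _ c1 c2 c3 c4] by blast
  qed
  then show ?thesis using LX unfolding L_def by simp
qed


lemma u_solves:
  fixes P :: "'n::finite \<Rightarrow> 'n \<Rightarrow> real" and Lp :: "real^'n^'n" and g :: "'n \<Rightarrow> real"
  assumes LLp: "lap \<pi> P ** Lp = mat 1 - Emat" and Prow: "\<forall>x. (\<Sum>k\<in>UNIV. P x k) = 1"
    and ij: "i \<noteq> j"
  defines "u \<equiv> \<lambda>k. (\<Sum>m\<in>UNIV. (Lp $ k $ m - Lp $ j $ m + Lp $ j $ j - Lp $ k $ j) * g m)"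
  shows "\<pi> i * (u i - (\<Sum>k\<in>UNIV. P i k * u k)) = g i"
proof -
  define L where "L = lap \<pi> P"
  define S where "S = (\<Sum>m\<in>UNIV. g m)"
  define c where "c = (\<Sum>m\<in>UNIV. (Lp $ j $ j - Lp $ j $ m) * g m)"
  define n where "n = real CARD('n)"
  have ent: "(\<Sum>k\<in>UNIV. L $ i $ k * Lp $ k $ m) = (if i = m then 1 else 0) - 1 / n" for m
  proof -
    have "(L ** Lp) $ i $ m = (mat 1 - Emat) $ i $ m" using LLp unfolding L_def by simp
    then show ?thesis by (simp add: matrix_matrix_mult_def mat_def Emat_def n_def)
  qed
  have uk: "u k = (\<Sum>m\<in>UNIV. Lp $ k $ m * g m) + c - S * Lp $ k $ j" for k
    unfolding u_def c_def S_def
    by (simp add: algebra_simps sum.distrib sum_subtractf sum_distrib_left sum_distrib_right)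
  have "(\<Sum>k\<in>UNIV. L $ i $ k * u k)
      = (\<Sum>k\<in>UNIV. L $ i $ k * (\<Sum>m\<in>UNIV. Lp $ k $ m * g m)) + c * (\<Sum>k\<in>UNIV. L $ i $ k)
        - S * (\<Sum>k\<in>UNIV. L $ i $ k * Lp $ k $ j)"
    unfolding uk by (simp add: algebra_simps sum.distrib sum_subtractf sum_distrib_left)
  also have "(\<Sum>k\<in>UNIV. L $ i $ k * (\<Sum>m\<in>UNIV. Lp $ k $ m * g m))
      = (\<Sum>m\<in>UNIV. (\<Sum>k\<in>UNIV. L $ i $ k * Lp $ k $ m) * g m)"
    by (simp add: sum_distrib_left sum_distrib_right mult.assoc) (rule sum.swap)
  also have "\<dots> = (\<Sum>m\<in>UNIV. (if i = m then g m else 0) - g m / n)"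
    by (rule sum.cong) (auto simp: ent algebra_simps)
  also have "\<dots> = g i - S / n" by (simp add: sum_subtractf S_def sum_divide_distrib)
  also have "(\<Sum>k\<in>UNIV. L $ i $ k) = 0" unfolding L_def by (rule lap_rowsum[OF Prow])
  also have "(\<Sum>k\<in>UNIV. L $ i $ k * Lp $ k $ j) = - 1 / n" using ent[of j] ij by simp
  finally have "(\<Sum>k\<in>UNIV. L $ i $ k * u k) = g i" by simp
  then show ?thesis using lap_mulv[of \<pi> P i u] unfolding L_def by simp
qed



lemma sum_split_j: "(\<Sum>k\<in>(UNIV::'n::finite set). f k) = f j + (\<Sum>k\<in>-{j}. (f k::real))"
  by (metis Compl_eq_Diff_UNIV finite iso_tuple_UNIV_I sum.remove)

lemma chain_facts:
  fixes A :: "'n::finite \<Rightarrow> 'n \<Rightarrow> real" and \<pi> :: "'n \<Rightarrow> real"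
  assumes nonneg: "\<forall>x y. A x y \<ge> 0"
    and sc: "strongly_connected A"
    and stat: "stationary_dist (trans_mat A) \<pi>"
  shows "(\<forall>x y. trans_mat A x y \<ge> 0) \<and> (\<forall>x. (\<Sum>k\<in>UNIV. trans_mat A x k) = 1)
     \<and> (\<forall>i j. (i, j) \<in> {(x, y). trans_mat A x y > 0}\<^sup>*)
     \<and> (\<forall>j. (\<Sum>i\<in>UNIV. \<pi> i * trans_mat A i j) = \<pi> j) \<and> (\<forall>i. \<pi> i > 0)"
proof -
  have deg_nn: "degree A x \<ge> 0" for x unfolding degree_def using nonneg by (simp add: sum_nonneg)
  have deg_pos: "degree A x > 0" for x
  proof (cases "\<exists>y. y \<noteq> x")
    case True
    then obtain y where y: "y \<noteq> x" by blast
    have "(x, y) \<in> {(x, y). A x y > 0}\<^sup>*" using sc unfolding strongly_connected_def by blast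
    then obtain z where z: "A x z > 0"
      using y by (induction rule: converse_rtrancl_induct) auto
    have "A x z \<le> degree A x" unfolding degree_def using nonneg by (intro member_le_sum) auto
    then show ?thesis using z by simp
  next
    case False
    then have U: "UNIV = {x}" by auto
    have a: "(\<Sum>i\<in>UNIV. \<pi> i * trans_mat A i x) = \<pi> x" and b: "(\<Sum>i\<in>UNIV. \<pi> i) = 1"
      using stat unfolding stationary_dist_def by auto
    have "\<pi> x * trans_mat A x x = \<pi> x" using a unfolding U by simp
    moreover have "\<pi> x = 1" using b unfolding U by simp
    ultimately have "trans_mat A x x = 1" by simp
    then have "degree A x \<noteq> 0" unfolding trans_mat_def by auto
    then show ?thesis using deg_nn[of x] by simp
  qed
  have Pnn: "\<forall>x y. trans_mat A x y \<ge> 0" unfolding trans_mat_def using nonneg deg_nn by simp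
  have Prow: "\<forall>x. (\<Sum>k\<in>UNIV. trans_mat A x k) = 1"
  proof
    fix x
    have "(\<Sum>k\<in>UNIV. trans_mat A x k) = degree A x / degree A x"
      unfolding trans_mat_def by (simp add: sum_divide_distrib[symmetric] degree_def)
    then show "(\<Sum>k\<in>UNIV. trans_mat A x k) = 1" using deg_pos[of x] by simp
  qed
  have Rsame: "{(x, y). trans_mat A x y > 0} = {(x, y). A x y > 0}"
    unfolding trans_mat_def using deg_pos nonneg by (auto simp: zero_less_divide_iff) (meson not_less)+
  have conn: "\<forall>i j. (i, j) \<in> {(x, y). trans_mat A x y > 0}\<^sup>*"
    using sc unfolding strongly_connected_def Rsame by blast
  have st: "\<forall>j. (\<Sum>i\<in>UNIV. \<pi> i * trans_mat A i j) = \<pi> j" and pinn: "\<forall>i. \<pi> i \<ge> 0"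
    and p1: "(\<Sum>i\<in>UNIV. \<pi> i) = 1"
    using stat unfolding stationary_dist_def by auto
  have pipos: "\<forall>i. \<pi> i > 0"
  proof (rule ccontr)
    assume "\<not> (\<forall>i. \<pi> i > 0)"
    then obtain y where y: "\<pi> y = 0" using pinn by (metis less_eq_real_def)
    have zero_pred: "\<pi> x = 0" if "\<pi> z = 0" "trans_mat A x z > 0" for x z
    proof -
      have "\<pi> x * trans_mat A x z \<le> (\<Sum>i\<in>UNIV. \<pi> i * trans_mat A i z)"
        using pinn Pnn by (intro member_le_sum[where f="\<lambda>i. \<pi> i * trans_mat A i z"]) auto
      then have "\<pi> x * trans_mat A x z \<le> 0" using st that by simp
      then show ?thesis using that pinn[rule_format, of x]
        by (smt (verit) mult_pos_pos)
    qed
    have "\<pi> x = 0" for x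
    proof -
      have "(x, y) \<in> {(x, y). trans_mat A x y > 0}\<^sup>*" using conn by blast
      then show ?thesis
        by (induction rule: converse_rtrancl_induct) (use y zero_pred in auto)
    qed
    then show False using p1 by simp
  qed
  show ?thesis using Pnn Prow conn st pipos by blast
qed


lemma hitting_formula:
  fixes P w :: "'n::finite \<Rightarrow> 'n \<Rightarrow> real" and \<pi> :: "'n \<Rightarrow> real" and Lp :: "real^'n^'n"
  assumes Pnn: "\<forall>x y. P x y \<ge> 0" and Prow: "\<forall>x. (\<Sum>k\<in>UNIV. P x k) = 1"
    and conn: "\<forall>i j. (i, j) \<in> {(x, y). P x y > 0}\<^sup>*"
    and pipos: "\<forall>i. \<pi> i > 0" and LLp: "lap \<pi> P ** Lp = mat 1 - Emat"
  shows "(if i = j then 0 else infsum (\<lambda>ys. walk_prob P i ys * walk_cost w i ys) (first_hit_walks j))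
       = (\<Sum>m\<in>UNIV. (Lp $ i $ m - Lp $ j $ m + Lp $ j $ j - Lp $ i $ j) * ((\<Sum>k\<in>UNIV. P m k * w m k) * \<pi> m))"
proof -
  define U where "U = (\<lambda>g k. (\<Sum>m\<in>UNIV. (Lp $ k $ m - Lp $ j $ m + Lp $ j $ j - Lp $ k $ j) * (g m::real)))"
  have Uj: "U g j = 0" for g unfolding U_def by simp
  have Usol: "U g i - (\<Sum>k\<in>UNIV. P i k * U g k) = g i / \<pi> i" if "i \<noteq> j" for g i
    using u_solves[OF LLp Prow that, of g] pipos[rule_format, of i] unfolding U_def
    by (simp add: field_simps)
  have connj: "\<forall>i. (i, j) \<in> {(x, y). P x y > 0}\<^sup>*" using conn by blast
  \<comment> \<open>supersolution for the expected length\<close>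
  define u1 where "u1 = U \<pi>"
  define c where "c = (\<Sum>k\<in>UNIV. \<bar>u1 k\<bar>)"
  have c_ge: "\<bar>u1 k\<bar> \<le> c" for k unfolding c_def by (rule member_le_sum) auto
  have c_nn: "c \<ge> 0" unfolding c_def by (simp add: sum_nonneg)
  define h0 where "h0 = (\<lambda>k. if k = j then 1 + (\<Sum>l\<in>-{j}. P j l * (u1 l + c)) else u1 k + c)"
  have h0nn: "\<forall>k. h0 k \<ge> 0"
  proof
    fix k
    have "\<forall>l. u1 l + c \<ge> 0" using c_ge by (smt (verit))
    then show "h0 k \<ge> 0" unfolding h0_def using Pnn c_ge[of k]
      by (auto intro!: add_nonneg_nonneg sum_nonneg)
  qed
  have hsup: "\<forall>i. 1 + (\<Sum>k\<in>-{j}. P i k * h0 k) \<le> h0 i"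
  proof
    fix i
    have eq: "(\<Sum>k\<in>-{j}. P i k * h0 k) = (\<Sum>k\<in>-{j}. P i k * (u1 k + c))"
      unfolding h0_def by (rule sum.cong) auto
    show "1 + (\<Sum>k\<in>-{j}. P i k * h0 k) \<le> h0 i"
    proof (cases "i = j")
      case True then show ?thesis unfolding eq by (simp add: h0_def)
    next
      case False
      have "u1 i - (\<Sum>k\<in>UNIV. P i k * u1 k) = 1"
        using Usol[OF False, of \<pi>] pipos[rule_format, of i] unfolding u1_def by simp
      then have u1i: "u1 i = 1 + (\<Sum>k\<in>-{j}. P i k * u1 k)"
        using sum_split_j[of "\<lambda>k. P i k * u1 k" j] Uj[of \<pi>] unfolding u1_def by simp
      have "(\<Sum>k\<in>-{j}. P i k) \<le> 1"
        using Prow[rule_format, of i] sum_split_j[of "\<lambda>k. P i k" j] Pnn[rule_format, of i j] by simp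
      then have "(\<Sum>k\<in>-{j}. P i k) * c \<le> c" using c_nn mult_right_mono[of "sum (P i) (-{j})" 1 c] by linarith
      then show ?thesis unfolding eq using False u1i
        by (simp add: h0_def distrib_left sum.distrib sum_distrib_right[symmetric])
    qed
  qed
  have ls: "\<And>k. (\<lambda>ys. walk_prob P k ys * length ys) summable_on first_hit_walks j"
    by (rule len_summable[OF Pnn Prow hsup h0nn])
  have sp: "\<And>k. (\<lambda>ys. walk_prob P k ys) summable_on first_hit_walks j"
    by (rule prob_summable[OF Pnn ls])
  have sc: "\<And>k. (\<lambda>ys. walk_prob P k ys * walk_cost w k ys) summable_on first_hit_walks j"
    by (rule cost_summable[OF Pnn ls])
  define Hp where "Hp = (\<lambda>k. infsum (walk_prob P k) (first_hit_walks j))"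
  have Hp_eq: "Hp i = P i j + (\<Sum>k\<in>-{j}. P i k * Hp k)" for i
    unfolding Hp_def by (rule Hp_rec) (use sp in auto)
  have Hp1: "Hp k = 1" if "k \<noteq> j" for k
  proof -
    define d where "d = (\<lambda>k. if k = j then 0 else Hp k - 1)"
    have "d k = 0"
    proof (rule max_principle[OF Pnn Prow connj])
      show "d j = 0" unfolding d_def by simp
      show "\<forall>i. i \<noteq> j \<longrightarrow> d i = (\<Sum>k\<in>UNIV. P i k * d k)"
      proof (intro allI impI)
        fix i assume "i \<noteq> j"
        have "(\<Sum>k\<in>UNIV. P i k * d k) = (\<Sum>k\<in>-{j}. P i k * (Hp k - 1))"
          using sum_split_j[of "\<lambda>k. P i k * d k" j] unfolding d_def
          by (simp add: sum.cong[OF refl, of "-{j}" "\<lambda>k. P i k * (if k = j then 0 else Hp k - 1)" "\<lambda>k. P i k * (Hp k - 1)"])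
        also have "\<dots> = (\<Sum>k\<in>-{j}. P i k * Hp k) - (\<Sum>k\<in>-{j}. P i k)"
          by (simp add: right_diff_distrib sum_subtractf)
        also have "(\<Sum>k\<in>-{j}. P i k) = 1 - P i j"
          using Prow[rule_format, of i] sum_split_j[of "\<lambda>k. P i k" j] by simp
        finally show "d i = (\<Sum>k\<in>UNIV. P i k * d k)"
          using Hp_eq[of i] \<open>i \<noteq> j\<close> unfolding d_def by simp
      qed
    qed
    then show ?thesis using that unfolding d_def by simp
  qed
  define H where "H = (\<lambda>k. infsum (\<lambda>ys. walk_prob P k ys * walk_cost w k ys) (first_hit_walks j))"
  define h where "h = (\<lambda>k. if k = j then 0 else H k)"
  have h_eq: "h i = (\<Sum>k\<in>UNIV. P i k * w i k) + (\<Sum>k\<in>UNIV. P i k * h k)" if "i \<noteq> j" for i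
  proof -
    have "H i = P i j * w i j + (\<Sum>k\<in>-{j}. P i k * w i k * Hp k + P i k * H k)"
      unfolding H_def Hp_def by (rule H_rec) (use sp sc in auto)
    also have "(\<Sum>k\<in>-{j}. P i k * w i k * Hp k + P i k * H k) = (\<Sum>k\<in>-{j}. P i k * w i k) + (\<Sum>k\<in>-{j}. P i k * h k)"
    proof -
      have "(\<Sum>k\<in>-{j}. P i k * w i k * Hp k + P i k * H k) = (\<Sum>k\<in>-{j}. P i k * w i k + P i k * h k)"
        by (rule sum.cong) (auto simp: Hp1 h_def)
      then show ?thesis by (simp add: sum.distrib)
    qed
    finally show ?thesis
      using that sum_split_j[of "\<lambda>k. P i k * w i k" j] sum_split_j[of "\<lambda>k. P i k * h k" j]
      unfolding h_def by simp
  qed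
  define g where "g = (\<lambda>m. (\<Sum>k\<in>UNIV. P m k * w m k) * \<pi> m)"
  have "h i - U g i = 0"
  proof (rule max_principle[OF Pnn Prow connj, of "\<lambda>k. h k - U g k"])
    show "h j - U g j = 0" unfolding h_def using Uj by simp
    show "\<forall>i. i \<noteq> j \<longrightarrow> h i - U g i = (\<Sum>k\<in>UNIV. P i k * (h k - U g k))"
    proof (intro allI impI)
      fix i assume ij: "i \<noteq> j"
      have "U g i = (\<Sum>k\<in>UNIV. P i k * w i k) + (\<Sum>k\<in>UNIV. P i k * U g k)"
        using Usol[OF ij, of g] pipos[rule_format, of i] unfolding g_def by simp
      then show "h i - U g i = (\<Sum>k\<in>UNIV. P i k * (h k - U g k))"
        using h_eq[OF ij] by (simp add: right_diff_distrib sum_subtractf)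
    qed
  qed
  then show ?thesis unfolding h_def H_def U_def g_def by simp
qed


theorem corollary3:
  fixes A w :: "'n::finite \<Rightarrow> 'n \<Rightarrow> real" and \<pi> :: "'n \<Rightarrow> real"
  assumes nonneg: "\<forall>x y. A x y \<ge> 0"
    and sc: "strongly_connected A"
    and stat: "stationary_dist (trans_mat A) \<pi>"
  defines "Lp \<equiv> pinv (lap \<pi> (trans_mat A))"
    and "g \<equiv> (\<lambda>m. (\<Sum>k\<in>UNIV. trans_mat A m k * w m k) * \<pi> m)"
  shows "\<forall>i j. hitting_cost A w i j
             = (\<Sum>m\<in>UNIV. (Lp $ i $ m - Lp $ j $ m + Lp $ j $ j - Lp $ i $ j) * g m)
          \<and> commute_cost A w i j
             = (Lp $ i $ i + Lp $ j $ j - Lp $ i $ j - Lp $ j $ i) * (\<Sum>m\<in>UNIV. g m)"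
proof -
  note cf = chain_facts[OF nonneg sc stat]
  have Pnn: "\<forall>x y. trans_mat A x y \<ge> 0" and Prow: "\<forall>x. (\<Sum>k\<in>UNIV. trans_mat A x k) = 1"
    and conn: "\<forall>i j. (i, j) \<in> {(x, y). trans_mat A x y > 0}\<^sup>*"
    and st: "\<forall>j. (\<Sum>i\<in>UNIV. \<pi> i * trans_mat A i j) = \<pi> j" and pipos: "\<forall>i. \<pi> i > 0"
    using cf by auto
  have LLp: "lap \<pi> (trans_mat A) ** Lp = mat 1 - Emat"
    unfolding Lp_def by (rule pinv_lap[OF Pnn Prow conn st pipos])
  have hc: "hitting_cost A w i j = (\<Sum>m\<in>UNIV. (Lp $ i $ m - Lp $ j $ m + Lp $ j $ j - Lp $ i $ j) * g m)" for i j
    unfolding hitting_cost_def g_def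
    by (rule hitting_formula[OF Pnn Prow conn pipos LLp])
  show ?thesis
  proof (intro allI conjI)
    fix i j
    show "hitting_cost A w i j = (\<Sum>m\<in>UNIV. (Lp $ i $ m - Lp $ j $ m + Lp $ j $ j - Lp $ i $ j) * g m)"
      by (rule hc)
    have "commute_cost A w i j = (\<Sum>m\<in>UNIV. (Lp $ i $ m - Lp $ j $ m + Lp $ j $ j - Lp $ i $ j) * g m
         + (Lp $ j $ m - Lp $ i $ m + Lp $ i $ i - Lp $ j $ i) * g m)"
      unfolding commute_cost_def hc by (simp add: sum.distrib)
    also have "\<dots> = (\<Sum>m\<in>UNIV. (Lp $ i $ i + Lp $ j $ j - Lp $ i $ j - Lp $ j $ i) * g m)"
      by (rule sum.cong) (auto simp: algebra_simps)
    finally show "commute_cost A w i j = (Lp $ i $ i + Lp $ j $ j - Lp $ i $ j - Lp $ j $ i) * (\<Sum>m\<in>UNIV. g m)"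
      by (simp add: sum_distrib_left)
  qed
qed

end
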